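(* Let $X$ and $Y$ be Alexandroff spaces satisfying: (i) there is a bijection $b:\{S(x):x\in X\}\to\{S(y):y\in Y\}$; (ii) for each $x\in X$ there is a homeomorphism $f_x:S(x)\to b(S(x))$ (subspace topologies); (iii) for all $x_1,x_2\in X$, if $S(x_1)\cap S(x_2)\neq\emptyset$ then $f_{x_1}(S(x_1)\cap S(x_2))=f_{x_2}(S(x_1)\cap S(x_2))$. Then $X$ and $Y$ are homeomorphic.
   Context: A topological space $X$ is an Alexandroff space if arbitrary intersections of open sets are open. In an Alexandroff space, $S(x)$ denotes the minimal open neighborhood of $x$, i.e. the intersection of all open sets containing $x$, which is open. *)

theory Defs
  imports "HOL-Analysis.Analysis"
begin

text \<open>Alexandroff space: arbitrary (nonempty) intersections of open sets are open.
  The empty intersection is the whole space, which is always open.\<close>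
definition alexandroff_space :: "'a topology \<Rightarrow> bool" where
  "alexandroff_space X \<longleftrightarrow>
     (\<forall>\<U>. \<U> \<noteq> {} \<and> (\<forall>U\<in>\<U>. openin X U) \<longrightarrow> openin X (\<Inter>\<U>))"

definition min_nbhd :: "'a topology \<Rightarrow> 'a \<Rightarrow> 'a set" where
  "min_nbhd X x = \<Inter>{U. openin X U \<and> x \<in> U}"

end

theory Submission
  imports Defs
begin

lemma mn_open: assumes A: "alexandroff_space X" and x: "x \<in> topspace X"
  shows "openin X (min_nbhd X x)"
proof -
  let ?U = "{U. openin X U \<and> x \<in> U}"
  have "topspace X \<in> ?U" using x by simp
  then have ne: "?U \<noteq> {}" by blast
  have op: "\<forall>U\<in>?U. openin X U" by simp
  have H: "?U \<noteq> {} \<and> (\<forall>U\<in>?U. openin X U) \<longrightarrow> openin X (\<Inter>?U)"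
    using A unfolding alexandroff_space_def by (rule spec)
  have "openin X (\<Inter>?U)" by (rule mp[OF H conjI[OF ne op]])
  then show ?thesis unfolding min_nbhd_def .
qed

lemma mn_mem: "x \<in> topspace X \<Longrightarrow> x \<in> min_nbhd X x"
  unfolding min_nbhd_def by auto

lemma mn_sub: "openin X U \<Longrightarrow> x \<in> U \<Longrightarrow> min_nbhd X x \<subseteq> U"
  unfolding min_nbhd_def by auto

lemma mn_top: "x \<in> topspace X \<Longrightarrow> min_nbhd X x \<subseteq> topspace X"
  by (simp add: mn_sub)

lemma mn_openI: assumes A: "alexandroff_space X" and Ut: "U \<subseteq> topspace X"
    and US: "\<forall>x\<in>U. min_nbhd X x \<subseteq> U"
  shows "openin X U"
proof -
  have 1: "U \<subseteq> \<Union>(min_nbhd X ` U)"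
  proof
    fix x assume xU: "x \<in> U"
    have "x \<in> min_nbhd X x" using mn_mem[OF subsetD[OF Ut xU]] .
    then show "x \<in> \<Union>(min_nbhd X ` U)" using xU by (rule UN_I[rotated])
  qed
  have 2: "\<Union>(min_nbhd X ` U) \<subseteq> U" using US by (simp add: UN_subset_iff)
  have E: "\<Union>(min_nbhd X ` U) = U" using 1 2 by (rule equalityI[rotated])
  have "openin X (\<Union>(min_nbhd X ` U))"
  proof (rule openin_Union)
    fix V assume "V \<in> min_nbhd X ` U"
    then obtain x where xU: "x \<in> U" and V: "V = min_nbhd X x" by (rule imageE)
    show "openin X V" unfolding V using mn_open[OF A subsetD[OF Ut xU]] .
  qed
  then show ?thesis unfolding E .
qed

lemma mn_spec: assumes "alexandroff_space X" "x \<in> topspace X" "y \<in> topspace X"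
  shows "y \<in> min_nbhd X x \<longleftrightarrow> min_nbhd X y \<subseteq> min_nbhd X x"
proof
  assume "y \<in> min_nbhd X x"
  then show "min_nbhd X y \<subseteq> min_nbhd X x" by (rule mn_sub[OF mn_open[OF assms(1,2)]])
next
  assume "min_nbhd X y \<subseteq> min_nbhd X x"
  then show "y \<in> min_nbhd X x" using mn_mem[OF assms(3)] by (rule subsetD)
qed

lemma mn_hom:
  assumes AX: "alexandroff_space X" and AY: "alexandroff_space Y"
    and x: "x \<in> topspace X" and T: "T \<in> min_nbhd Y ` topspace Y"
    and g: "homeomorphic_map (subtopology X (min_nbhd X x)) (subtopology Y T) g"
    and z: "z \<in> min_nbhd X x"
  shows "g ` (min_nbhd X z) = min_nbhd Y (g z)"
proof -
  have Ssub: "min_nbhd X x \<subseteq> topspace X" by (rule mn_top[OF x])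
  have zt: "z \<in> topspace X" using Ssub z by (rule subsetD)
  have oS: "openin X (min_nbhd X x)" by (rule mn_open[OF AX x])
  obtain t where t: "t \<in> topspace Y" and Tt: "T = min_nbhd Y t" using T by (rule imageE)
  have oT: "openin Y T" unfolding Tt by (rule mn_open[OF AY t])
  have Tt: "T \<subseteq> topspace Y" using oT by (rule openin_subset)
  have tsX: "topspace (subtopology X (min_nbhd X x)) = min_nbhd X x"
    using Ssub by (simp add: topspace_subtopology Int_absorb1)
  have tsY: "topspace (subtopology Y T) = T"
    using Tt by (simp add: topspace_subtopology Int_absorb1)
  have img: "g ` min_nbhd X x = T" using homeomorphic_imp_surjective_map[OF g] unfolding tsX tsY .
  have zz: "min_nbhd X z \<subseteq> min_nbhd X x" using z by (rule mn_sub[OF oS])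
  have gz: "g z \<in> T" using z img by auto
  have gzt: "g z \<in> topspace Y" using Tt gz by (rule subsetD)
  have oz: "openin X (min_nbhd X z)" by (rule mn_open[OF AX zt])
  have oSz: "openin (subtopology X (min_nbhd X x)) (min_nbhd X z)"
    unfolding openin_open_subtopology[OF oS] using oz zz by (rule conjI)
  have sub: "min_nbhd X z \<subseteq> topspace (subtopology X (min_nbhd X x))"
    unfolding tsX by (rule zz)
  have "openin (subtopology Y T) (g ` min_nbhd X z)"
    using oSz by (rule iffD2[OF homeomorphic_map_openness[OF g sub]])
  then have og: "openin Y (g ` min_nbhd X z)" by (rule openin_trans_full[OF _ oT])
  have gin: "g z \<in> g ` min_nbhd X z" using mn_mem[OF zt] by (rule imageI)
  have 1: "min_nbhd Y (g z) \<subseteq> g ` min_nbhd X z" using og gin by (rule mn_sub)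
  have ST: "min_nbhd Y (g z) \<subseteq> T" using oT gz by (rule mn_sub)
  define P where "P = {w \<in> min_nbhd X x. g w \<in> min_nbhd Y (g z)}"
  have oY: "openin Y (min_nbhd Y (g z))" by (rule mn_open[OF AY gzt])
  have "openin (subtopology Y T) (min_nbhd Y (g z))"
    unfolding openin_open_subtopology[OF oT] using oY ST by (rule conjI)
  then have "openin (subtopology X (min_nbhd X x)) {w \<in> topspace (subtopology X (min_nbhd X x)). g w \<in> min_nbhd Y (g z)}"
    by (rule openin_continuous_map_preimage[OF homeomorphic_imp_continuous_map[OF g]])
  then have "openin (subtopology X (min_nbhd X x)) P"
    unfolding P_def tsX .
  then have "openin X P" by (rule openin_trans_full[OF _ oS])
  moreover have "z \<in> P" unfolding P_def using z mn_mem[OF gzt] by simp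
  ultimately have "min_nbhd X z \<subseteq> P" by (rule mn_sub)
  then have "g ` min_nbhd X z \<subseteq> min_nbhd Y (g z)" unfolding P_def by auto
  with 1 show ?thesis by (rule equalityI[rotated])
qed



theorem theorem13:
  fixes X :: "'a topology" and Y :: "'b topology"
    and b :: "'a set \<Rightarrow> 'b set" and f :: "'a \<Rightarrow> 'a \<Rightarrow> 'b"
  assumes "alexandroff_space X" and "alexandroff_space Y"
    and "bij_betw b (min_nbhd X ` topspace X) (min_nbhd Y ` topspace Y)"
    and "\<And>x. x \<in> topspace X \<Longrightarrow>
           homeomorphic_map (subtopology X (min_nbhd X x))
                            (subtopology Y (b (min_nbhd X x))) (f x)"
    and "\<And>x1 x2. x1 \<in> topspace X \<Longrightarrow> x2 \<in> topspace X \<Longrightarrow>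
           min_nbhd X x1 \<inter> min_nbhd X x2 \<noteq> {} \<Longrightarrow>
           f x1 ` (min_nbhd X x1 \<inter> min_nbhd X x2) = f x2 ` (min_nbhd X x1 \<inter> min_nbhd X x2)"
  shows "X homeomorphic_space Y"
proof -
  let ?S = "min_nbhd X" and ?SY = "min_nbhd Y"
  note AX = assms(1) and AY = assms(2) and bij = assms(3) and hom = assms(4) and cmp = assms(5)
  have bT: "b (?S x) \<in> ?SY ` topspace Y" if "x \<in> topspace X" for x
    by (rule bij_betw_apply[OF bij]) (use that in blast)
  have bsub: "b (?S x) \<subseteq> topspace Y" if x: "x \<in> topspace X" for x
  proof -
    obtain y where "y \<in> topspace Y" "b (?S x) = ?SY y" using bT[OF x] by blast
    then show ?thesis by (simp add: mn_top)
  qed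
  have imgf: "f x ` ?S x = b (?S x)" if x: "x \<in> topspace X" for x
  proof -
    have "topspace (subtopology X (?S x)) = ?S x" using mn_top[OF x] by auto
    moreover have "topspace (subtopology Y (b (?S x))) = b (?S x)" using bsub[OF x] by auto
    ultimately show ?thesis using homeomorphic_imp_surjective_map[OF hom[OF x]] by simp
  qed
  have hm: "f x ` ?S y = ?SY (f x y)" if x: "x \<in> topspace X" and y: "y \<in> ?S x" for x y
    using mn_hom[OF AX AY x bT[OF x] hom[OF x] y] .
  have key: "b (?S y) = ?SY (f x y)" if x: "x \<in> topspace X" and y: "y \<in> ?S x" for x y
  proof -
    have yt: "y \<in> topspace X" using y mn_top[OF x] by blast
    have sub: "?S y \<subseteq> ?S x" using mn_spec[OF AX x yt] y by blast
    have "?S x \<inter> ?S y = ?S y" using sub by blast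
    moreover have "?S y \<noteq> {}" using mn_mem[OF yt] by blast
    ultimately have "f x ` ?S y = f y ` ?S y" using cmp[OF x yt] by simp
    then show ?thesis using imgf[OF yt] hm[OF x y] by simp
  qed
  have binj: "?S x = ?S y" if "x \<in> topspace X" "y \<in> topspace X" "b (?S x) = b (?S y)" for x y
    using bij that unfolding bij_betw_def inj_on_def by blast
  define r where "r x = (SOME w. w \<in> topspace X \<and> ?S w = ?S x)" for x
  have rp: "r x \<in> topspace X \<and> ?S (r x) = ?S x" if "x \<in> topspace X" for x
    using someI[of "\<lambda>w. w \<in> topspace X \<and> ?S w = ?S x" x] that unfolding r_def by blast
  have req: "r x = r y" if "?S x = ?S y" for x y using that unfolding r_def by simp
  define F where "F x = f (r x) x" for x
  have xr: "x \<in> ?S (r x)" if "x \<in> topspace X" for x using rp[OF that] mn_mem[OF that] by simp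
  have FS: "?SY (F x) = b (?S x)" if x: "x \<in> topspace X" for x
    using key[OF conjunct1[OF rp[OF x]] xr[OF x]] rp[OF x] unfolding F_def by simp
  have Ft: "F x \<in> topspace Y" if x: "x \<in> topspace X" for x
  proof -
    have "F x \<in> f (r x) ` ?S (r x)" unfolding F_def using xr[OF x] by blast
    then show ?thesis using imgf[OF conjunct1[OF rp[OF x]]] bsub[OF conjunct1[OF rp[OF x]]] by blast
  qed
  have Fspec: "y \<in> ?S x \<longleftrightarrow> F y \<in> ?SY (F x)" if x: "x \<in> topspace X" and y: "y \<in> topspace X" for x y
  proof
    assume yx: "y \<in> ?S x"
    have rx: "r x \<in> topspace X" and Srx: "?S (r x) = ?S x" using rp[OF x] by auto
    have yr: "y \<in> ?S (r x)" using yx Srx by simp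
    have sub: "?S y \<subseteq> ?S x" using mn_spec[OF AX x y] yx by blast
    have "F y \<in> ?SY (F y)" using mn_mem[OF Ft[OF y]] .
    also have "\<dots> = b (?S y)" using FS[OF y] .
    also have "\<dots> = ?SY (f (r x) y)" using key[OF rx yr] .
    also have "\<dots> = f (r x) ` ?S y" using hm[OF rx yr] by simp
    also have "\<dots> \<subseteq> f (r x) ` ?S (r x)" using sub Srx by blast
    also have "\<dots> = b (?S x)" using imgf[OF rx] Srx by simp
    also have "\<dots> = ?SY (F x)" using FS[OF x] by simp
    finally show "F y \<in> ?SY (F x)" .
  next
    assume "F y \<in> ?SY (F x)"
    have rx: "r x \<in> topspace X" and Srx: "?S (r x) = ?S x" using rp[OF x] by auto
    have "F y \<in> f (r x) ` ?S (r x)" using \<open>F y \<in> ?SY (F x)\<close> FS[OF x] imgf[OF rx] Srx by simp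
    then obtain z where z: "z \<in> ?S (r x)" and Fz: "F y = f (r x) z" by blast
    have zt: "z \<in> topspace X" using z mn_top[OF rx] by blast
    have "b (?S z) = ?SY (F y)" using key[OF rx z] Fz by simp
    also have "\<dots> = b (?S y)" using FS[OF y] .
    finally have "?S z = ?S y" using binj zt y by blast
    moreover have "?S z \<subseteq> ?S x" using mn_spec[OF AX x zt] z Srx by simp
    ultimately show "y \<in> ?S x" using mn_mem[OF y] by blast
  qed
  have inj: "inj_on F (topspace X)"
  proof (rule inj_onI)
    fix x y assume x: "x \<in> topspace X" and y: "y \<in> topspace X" and e: "F x = F y"
    have "?S x = ?S y" using binj[OF x y] FS[OF x] FS[OF y] e by simp
    then have rr: "r x = r y" by (rule req)
    have "homeomorphic_map (subtopology X (?S (r x))) (subtopology Y (b (?S (r x)))) (f (r x))"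
      using hom rp[OF x] by blast
    then have "inj_on (f (r x)) (topspace (subtopology X (?S (r x))))"
      by (rule homeomorphic_imp_injective_map)
    moreover have "topspace (subtopology X (?S (r x))) = ?S (r x)"
      using mn_top[OF conjunct1[OF rp[OF x]]] by auto
    ultimately show "x = y" using xr[OF x] xr[OF y] rr e unfolding F_def inj_on_def by metis
  qed
  have surj: "F ` topspace X = topspace Y"
  proof
    show "F ` topspace X \<subseteq> topspace Y" using Ft by blast
  next
    show "topspace Y \<subseteq> F ` topspace X"
    proof
      fix y' assume y': "y' \<in> topspace Y"
      have "?SY y' \<in> b ` (?S ` topspace X)" using bij y' unfolding bij_betw_def by blast
      then obtain x where x: "x \<in> topspace X" and bx: "b (?S x) = ?SY y'" by blast
      have rx: "r x \<in> topspace X" and Srx: "?S (r x) = ?S x" using rp[OF x] by auto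
      have "y' \<in> f (r x) ` ?S (r x)" using mn_mem[OF y'] bx imgf[OF rx] Srx by simp
      then obtain z where z: "z \<in> ?S (r x)" and yz: "y' = f (r x) z" by blast
      have zt: "z \<in> topspace X" using z mn_top[OF rx] by blast
      have "b (?S z) = b (?S x)" using key[OF rx z] yz bx by simp
      then have "?S z = ?S x" using binj zt x by blast
      then have "r z = r x" by (rule req)
      then have "F z = y'" unfolding F_def using yz by simp
      then show "y' \<in> F ` topspace X" using zt by blast
    qed
  qed
  have cont: "continuous_map X Y F"
    unfolding continuous_map_def
  proof (intro conjI allI impI)
    show "F \<in> topspace X \<rightarrow> topspace Y" using Ft by blast
  next
    fix V assume V: "openin Y V"
    show "openin X {x \<in> topspace X. F x \<in> V}"
    proof (rule mn_openI[OF AX])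
      show "{x \<in> topspace X. F x \<in> V} \<subseteq> topspace X" by blast
    next
      show "\<forall>x\<in>{x \<in> topspace X. F x \<in> V}. ?S x \<subseteq> {x \<in> topspace X. F x \<in> V}"
      proof (intro ballI subsetI)
      fix x y assume x: "x \<in> {x \<in> topspace X. F x \<in> V}" and y: "y \<in> ?S x"
      have xt: "x \<in> topspace X" using x by blast
      have yt: "y \<in> topspace X" using y mn_top[OF xt] by blast
      have "F y \<in> ?SY (F x)" using Fspec[OF xt yt] y by blast
      moreover have "?SY (F x) \<subseteq> V" using V conjunct2[OF CollectD[OF x]] by (rule mn_sub)
      ultimately show "y \<in> {x \<in> topspace X. F x \<in> V}" using yt by blast
    qed
    qed
  qed
  have opn: "open_map X Y F"
    unfolding open_map_def
  proof (intro allI impI)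
    fix U assume U: "openin X U"
    have Ut: "U \<subseteq> topspace X" using U openin_subset by blast
    show "openin Y (F ` U)"
    proof (rule mn_openI[OF AY])
      show "F ` U \<subseteq> topspace Y" using Ut Ft by blast
      show "\<forall>u\<in>F ` U. ?SY u \<subseteq> F ` U"
      proof (intro ballI subsetI)
        fix u y' assume u: "u \<in> F ` U" and y': "y' \<in> ?SY u"
        obtain x where x: "x \<in> U" and ux: "u = F x" using u by blast
        have xt: "x \<in> topspace X" using x Ut by blast
        have "y' \<in> topspace Y" using mn_top[OF Ft[OF xt]] y' unfolding ux by (rule subsetD)
        then obtain y where yt: "y \<in> topspace X" and yy: "y' = F y" using surj by blast
        have "y \<in> ?S x" using Fspec[OF xt yt] y' ux yy by simp
        then have "y \<in> U" by (rule subsetD[OF mn_sub[OF U x]])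
        then show "y' \<in> F ` U" using yy by blast
      qed
    qed
  qed
  have "homeomorphic_map X Y F"
    by (rule bijective_open_imp_homeomorphic_map[OF cont opn surj inj])
  then show ?thesis by (rule homeomorphic_map_imp_homeomorphic_space)
qed

end
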